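(* Let $w_1,w_i\ge0$ with $w_1+w_i>0$, and let $\hat\mu_1,b_1,b_i,\hat\mu_i\in\mathcal M$ satisfy $\hat\mu_i\le b_i<b_1\le\hat\mu_1$. Set $\lambda=\frac{w_1b_1+w_ib_i}{w_1+w_i}$. Then for every $y\in[\hat\mu_i,\hat\mu_1]$, $$w_1\,d(\hat\mu_1,y)+w_i\,d(\hat\mu_i,y)\ \ge\ w_1\,d(b_1,\lambda)+w_i\,d(b_i,\lambda).$$
   Context: Fix a one-parameter canonical exponential family $\{\nu_\theta\}_{\theta\in\Theta}$ ($\Theta$ an open interval): $\frac{d\nu_\theta}{d\rho}(x)=\exp(x\theta-b(\theta))$ for a reference measure $\rho$ on $\mathbb R$, with $b(\theta)=\log\int e^{x\theta}d\rho(x)$. The mean map $\theta\mapsto b'(\theta)$ is a bijection from $\Theta$ onto an open interval $\mathcal M$, so members of the family are indexed by their mean. For $\mu,\mu'\in\mathcal M$, $d(\mu,\mu')$ denotes the Kullback–Leibler divergence from the member with mean $\mu$ to the member with mean $\mu'$. *)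

theory Defs
  imports "HOL-Probability.Probability"
begin

definition cumulant :: "real measure \<Rightarrow> real \<Rightarrow> real" where
  "cumulant \<rho> \<theta> = ln (\<integral>x. exp (x * \<theta>) \<partial>\<rho>)"

definition expfam :: "real measure \<Rightarrow> real \<Rightarrow> real measure" where
  "expfam \<rho> \<theta> = density \<rho> (\<lambda>x. ennreal (exp (x * \<theta> - cumulant \<rho> \<theta>)))"

definition mean_to_param :: "real measure \<Rightarrow> real set \<Rightarrow> real \<Rightarrow> real" where
  "mean_to_param \<rho> \<Theta> \<mu> = inv_into \<Theta> (deriv (cumulant \<rho>)) \<mu>"

text \<open>d(mu, mu') = KL(nu_mu || nu_mu'), the Kullback-Leibler divergence (natural log)
  from the member with mean mu to the member with mean mu'.
  Note: the library's KL_divergence b M N is the integral of log_b (dN/dM) w.r.t. N,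
  i.e. KL(N || M).\<close>
definition kl_mean :: "real measure \<Rightarrow> real set \<Rightarrow> real \<Rightarrow> real \<Rightarrow> real" where
  "kl_mean \<rho> \<Theta> \<mu> \<mu>' =
     KL_divergence (exp 1) (expfam \<rho> (mean_to_param \<rho> \<Theta> \<mu>')) (expfam \<rho> (mean_to_param \<rho> \<Theta> \<mu>))"

end

theory Submission
  imports Defs
begin

lemma abstract_kl:
  fixes T F :: "real \<Rightarrow> real" and M :: "real set"
  assumes nn: "\<And>a y. a \<in> M \<Longrightarrow> y \<in> M \<Longrightarrow> F y \<ge> F a + (T y - T a) * a"
    and mono: "\<And>a y. a \<in> M \<Longrightarrow> y \<in> M \<Longrightarrow> a \<le> y \<Longrightarrow> T a \<le> T y"
    and M_interval: "is_interval M"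
    and w1: "w1 \<ge> 0" and wi: "wi \<ge> 0" and wpos: "w1 + wi > 0"
    and inM: "mu1 \<in> M" "b1 \<in> M" "bi \<in> M" "mui \<in> M"
    and order: "mui \<le> bi" "bi < b1" "b1 \<le> mu1"
    and y: "y \<in> {mui..mu1}"
    and D: "\<And>a z. D a z = (T a - T z) * a - F a + F z"
  shows "w1 * D mu1 y + wi * D mui y \<ge> w1 * D b1 ((w1 * b1 + wi * bi) / (w1 + wi))
           + wi * D bi ((w1 * b1 + wi * bi) / (w1 + wi))"
proof -
  have iv: "\<And>a b x. a \<in> M \<Longrightarrow> b \<in> M \<Longrightarrow> a \<le> x \<Longrightarrow> x \<le> b \<Longrightarrow> x \<in> M"
    using M_interval unfolding is_interval_1 by blast
  define l where "l = (w1 * b1 + wi * bi) / (w1 + wi)"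
  have l1: "l \<le> b1" unfolding l_def using order w1 wi wpos
    using mult_left_mono[of bi b1 wi] by (simp add: divide_le_eq algebra_simps)
  have l2: "bi \<le> l" unfolding l_def using order w1 wi wpos
    using mult_left_mono[of bi b1 w1] by (simp add: le_divide_eq algebra_simps)
  have lM: "l \<in> M" using iv[OF inM(3) inM(2) l2 l1] .
  have yM: "y \<in> M" using iv[OF inM(4) inM(1)] y by auto
  have D0: "D a z \<ge> 0" if "a \<in> M" "z \<in> M" for a z
  proof -
    have "F z \<ge> F a + (T z - T a) * a" using nn[OF that] .
    then show ?thesis unfolding D by (simp add: algebra_simps)
  qed
  have f1: "D a z \<ge> D b z" if "a \<in> M" "b \<in> M" "z \<in> M"
    "(b \<le> a \<and> z \<le> b) \<or> (a \<le> b \<and> b \<le> z)" for a b z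
  proof -
    have e: "D a z - D b z = D a b + (T b - T z) * (a - b)" unfolding D by (simp add: algebra_simps)
    have "(T b - T z) * (a - b) \<ge> 0"
    proof (cases "b \<le> a \<and> z \<le> b")
      case True then show ?thesis using mono[of z b] that by simp
    next
      case False then have "a \<le> b" "b \<le> z" using that by auto
      then show ?thesis using mono[of b z] that by (simp add: mult_nonpos_nonpos)
    qed
    then show ?thesis using e D0[OF that(1,2)] by linarith
  qed
  have f2: "D b z' \<ge> D b z" if "b \<in> M" "z \<in> M" "z' \<in> M"
    "(b \<le> z \<and> z \<le> z') \<or> (z' \<le> z \<and> z \<le> b)" for b z z'
  proof -
    have e: "D b z' - D b z = D z z' + (T z - T z') * (b - z)" unfolding D by (simp add: algebra_simps)
    have "(T z - T z') * (b - z) \<ge> 0"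
    proof (cases "b \<le> z \<and> z \<le> z'")
      case True then show ?thesis using mono[of z z'] that by (simp add: mult_nonpos_nonpos)
    next
      case False then have "z' \<le> z" "z \<le> b" using that by auto
      then show ?thesis using mono[of z' z] that by simp
    qed
    then show ?thesis using e D0[OF that(2,3)] by linarith
  qed
  have f3: "w1 * D b1 z + wi * D bi z \<ge> w1 * D b1 l + wi * D bi l" if "z \<in> M" for z
  proof -
    have lw: "(w1 + wi) * l = w1 * b1 + wi * bi" unfolding l_def using wpos by simp
    have "w1 * D b1 z + wi * D bi z - (w1 * D b1 l + wi * D bi l)
       = (T l - T z) * (w1 * b1 + wi * bi) + (w1 + wi) * (F z - F l)"
      unfolding D by (simp add: algebra_simps)
    also have "\<dots> = (w1 + wi) * D l z" unfolding lw[symmetric] D by (simp add: algebra_simps)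
    moreover have "(w1 + wi) * D l z \<ge> 0" using D0[OF lM that] wpos by simp
    ultimately show ?thesis by linarith
  qed
  have "w1 * D mu1 y + wi * D mui y \<ge> w1 * D b1 l + wi * D bi l"
  proof (cases "y < bi")
    case True
    have a: "D mu1 y \<ge> D b1 y" using f1[OF inM(1) inM(2) yM] order True by auto
    have b: "D b1 y \<ge> D b1 bi" using f2[OF inM(2) inM(3) yM] order True by auto
    have c: "D mui y \<ge> 0" using D0[OF inM(4) yM] .
    have "D bi bi = 0" unfolding D by simp
    then show ?thesis using f3[OF inM(3)] mult_left_mono[OF order_trans[OF b a] w1]
      mult_left_mono[OF c wi] by simp
  next
    case False
    show ?thesis
    proof (cases "y > b1")
      case True
      have a: "D mui y \<ge> D bi y" using f1[OF inM(4) inM(3) yM] order True by auto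
      have b: "D bi y \<ge> D bi b1" using f2[OF inM(3) inM(2) yM] order True by auto
      have c: "D mu1 y \<ge> 0" using D0[OF inM(1) yM] .
      have "D b1 b1 = 0" unfolding D by simp
      then show ?thesis using f3[OF inM(2)] mult_left_mono[OF order_trans[OF b a] wi]
        mult_left_mono[OF c w1] by simp
    next
      case False2: False
      have a: "D mu1 y \<ge> D b1 y" using f1[OF inM(1) inM(2) yM] order False2 by auto
      have b: "D mui y \<ge> D bi y" using f1[OF inM(4) inM(3) yM] order False y by auto
      show ?thesis using f3[OF yM] mult_left_mono[OF a w1] mult_left_mono[OF b wi] by simp
    qed
  qed
  then show ?thesis unfolding l_def .
qed


locale ef =
  fixes \<rho> :: "real measure" and \<Theta> :: "real set"
  assumes rho_borel: "sets \<rho> = sets borel" and Theta_open: "open \<Theta>" and Theta_ne: "\<Theta> \<noteq> {}"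
    and integ: "\<And>\<theta>. \<theta> \<in> \<Theta> \<Longrightarrow> integrable \<rho> (\<lambda>x. exp (x * \<theta>))"
    and nz: "emeasure \<rho> (space \<rho>) \<noteq> 0"
begin

definition Z where "Z \<theta> = (\<integral>x. exp (x * \<theta>) \<partial>\<rho>)"
definition I where "I \<theta> = (\<integral>x. x * exp (x * \<theta>) \<partial>\<rho>)"
definition m where "m \<theta> = I \<theta> / Z \<theta>"

lemma meas: assumes "f \<in> borel_measurable borel" shows "f \<in> borel_measurable \<rho>"
  by (subst measurable_cong_sets[OF rho_borel refl]) (rule assms)

lemma Z_pos: assumes "\<theta> \<in> \<Theta>" shows "Z \<theta> > 0"
proof -
  have "Z \<theta> \<ge> 0" unfolding Z_def by simp
  moreover have "Z \<theta> \<noteq> 0"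
  proof
    assume "Z \<theta> = 0"
    then have "AE x in \<rho>. exp (x * \<theta>) = 0"
      using integral_nonneg_eq_0_iff_AE[OF integ[OF assms]] unfolding Z_def by simp
    then have "AE x in \<rho>. False" by simp
    then show False using nz ae_filter_eq_bot_iff[of \<rho>] by (simp add: eventually_False)
  qed
  ultimately show ?thesis by simp
qed

lemma ball_in: assumes "\<theta> \<in> \<Theta>" obtains e where "e > 0" "\<And>t. \<bar>t - \<theta>\<bar> < e \<Longrightarrow> t \<in> \<Theta>"
proof -
  obtain e where "e > 0" "ball \<theta> e \<subseteq> \<Theta>" using Theta_open assms openE by blast
  show ?thesis
  proof (rule that[of e])
    show "e > 0" by fact
    fix t assume "\<bar>t - \<theta>\<bar> < e"
    then have "t \<in> ball \<theta> e" by (simp add: dist_real_def abs_minus_commute)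
    then show "t \<in> \<Theta>" using \<open>ball \<theta> e \<subseteq> \<Theta>\<close> by blast
  qed
qed

lemma integ_x: assumes "\<theta> \<in> \<Theta>" shows "integrable \<rho> (\<lambda>x. x * exp (x * \<theta>))"
proof -
  obtain e where e: "e > 0" "\<And>t. \<bar>t - \<theta>\<bar> < e \<Longrightarrow> t \<in> \<Theta>" using ball_in[OF assms] by blast
  define h where "h = e / 2"
  have h: "h > 0" "\<theta> + h \<in> \<Theta>" "\<theta> - h \<in> \<Theta>" using e unfolding h_def by auto
  have bnd: "\<bar>x * exp (x * \<theta>)\<bar> \<le> (1 / h) * (exp (x * (\<theta> + h)) + exp (x * (\<theta> - h)))" for x
  proof -
    have a: "\<bar>x\<bar> * h \<le> exp (\<bar>x\<bar> * h)" using exp_ge_add_one_self[of "\<bar>x\<bar> * h"] by linarith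
    have b: "exp (\<bar>x\<bar> * h) \<le> exp (x * h) + exp (- (x * h))"
      by (cases "x \<ge> 0") auto
    have xx: "\<bar>x\<bar> \<le> (1/h) * (exp (x * h) + exp (- (x * h)))"
      using a b h(1) by (simp add: field_simps)
    have "\<bar>x\<bar> * exp (x * \<theta>) \<le> (1/h) * (exp (x * h) + exp (- (x * h))) * exp (x * \<theta>)"
      using mult_right_mono[OF xx, of "exp (x * \<theta>)"] by simp
    also have "\<dots> = (1 / h) * (exp (x * (\<theta> + h)) + exp (x * (\<theta> - h)))"
      by (simp add: algebra_simps flip: exp_add)
    finally show ?thesis by (simp add: abs_mult)
  qed
  show ?thesis
  proof (rule Bochner_Integration.integrable_bound)
    show "integrable \<rho> (\<lambda>x. (1 / h) * (exp (x * (\<theta> + h)) + exp (x * (\<theta> - h))))"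
      using integ[OF h(2)] integ[OF h(3)] by auto
    show "(\<lambda>x. x * exp (x * \<theta>)) \<in> borel_measurable \<rho>" by (intro meas) measurable
    show "AE x in \<rho>. norm (x * exp (x * \<theta>)) \<le> norm ((1 / h) * (exp (x * (\<theta> + h)) + exp (x * (\<theta> - h))))"
      using bnd h(1) by (auto intro!: AE_I2 order_trans[OF _ abs_ge_self])
  qed
qed

lemma gibbs: assumes "\<theta> \<in> \<Theta>" "\<theta>' \<in> \<Theta>"
  shows "ln (Z \<theta>') \<ge> ln (Z \<theta>) + (\<theta>' - \<theta>) * m \<theta>"
proof -
  define c where "c = (\<theta>' - \<theta>) * m \<theta>"
  have Zp: "Z \<theta> > 0" using Z_pos[OF assms(1)] .
  have pw: "exp (x * \<theta>') \<ge> exp c * (exp (x * \<theta>) * (1 - c) + (\<theta>' - \<theta>) * (x * exp (x * \<theta>)))" for x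
  proof -
    have "1 + (x * (\<theta>' - \<theta>) - c) \<le> exp (x * (\<theta>' - \<theta>) - c)" by (rule exp_ge_add_one_self)
    then have "(exp c * exp (x * \<theta>)) * (1 + (x * (\<theta>' - \<theta>) - c)) \<le> (exp c * exp (x * \<theta>)) * exp (x * (\<theta>' - \<theta>) - c)"
      by (intro mult_left_mono) auto
    also have "\<dots> = exp (x * \<theta>')" by (simp flip: exp_add add: algebra_simps)
    finally show ?thesis by (simp add: algebra_simps)
  qed
  have "(\<integral>x. exp c * (exp (x * \<theta>) * (1 - c) + (\<theta>' - \<theta>) * (x * exp (x * \<theta>))) \<partial>\<rho>) \<le> Z \<theta>'"
    unfolding Z_def
    by (rule integral_mono) (use pw integ[OF assms(1)] integ[OF assms(2)] integ_x[OF assms(1)] in auto)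
  also have "(\<integral>x. exp c * (exp (x * \<theta>) * (1 - c) + (\<theta>' - \<theta>) * (x * exp (x * \<theta>))) \<partial>\<rho>)
      = exp c * (Z \<theta> * (1 - c) + (\<theta>' - \<theta>) * I \<theta>)"
    unfolding Z_def I_def using integ[OF assms(1)] integ_x[OF assms(1)] by simp
  also have "(\<theta>' - \<theta>) * I \<theta> = c * Z \<theta>" unfolding c_def m_def using Zp by simp
  finally have "exp c * Z \<theta> \<le> Z \<theta>'" by (simp add: algebra_simps)
  then have "ln (exp c * Z \<theta>) \<le> ln (Z \<theta>')" using Zp Z_pos[OF assms(2)] by (subst ln_le_cancel_iff) auto
  then show ?thesis using Zp by (simp add: ln_mult c_def)
qed

lemma cumulant_eq: "cumulant \<rho> \<theta> = ln (Z \<theta>)" unfolding cumulant_def Z_def ..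

lemma deriv_eq: assumes "\<theta> \<in> \<Theta>" "cumulant \<rho> differentiable (at \<theta>)"
  shows "deriv (cumulant \<rho>) \<theta> = m \<theta>"
proof -
  have d: "DERIV (cumulant \<rho>) \<theta> :> deriv (cumulant \<rho>) \<theta>"
    using assms(2) DERIV_deriv_iff_real_differentiable by blast
  define g where "g t = cumulant \<rho> t - (t - \<theta>) * m \<theta>" for t
  have dg: "DERIV g \<theta> :> deriv (cumulant \<rho>) \<theta> - 1 * m \<theta>"
  proof -
    have "DERIV (\<lambda>t. (t - \<theta>) * m \<theta>) \<theta> :> 1 * m \<theta>"
      by (intro derivative_eq_intros) auto
    from DERIV_diff[OF d this] show ?thesis unfolding g_def by simp
  qed
  obtain e where e: "e > 0" "\<And>t. \<bar>t - \<theta>\<bar> < e \<Longrightarrow> t \<in> \<Theta>" using ball_in[OF assms(1)] by blast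
  have "\<forall>y. \<bar>\<theta> - y\<bar> < e \<longrightarrow> g \<theta> \<le> g y"
  proof (intro allI impI)
    fix y assume "\<bar>\<theta> - y\<bar> < e"
    then have "y \<in> \<Theta>" using e(2)[of y] by (simp add: abs_minus_commute)
    then show "g \<theta> \<le> g y" using gibbs[OF assms(1), of y] unfolding g_def cumulant_eq by simp
  qed
  from DERIV_local_min[OF dg e(1) this] show ?thesis by simp
qed

lemma sigma_finite: "sigma_finite_measure \<rho>"
proof -
  obtain \<theta>0 where t0: "\<theta>0 \<in> \<Theta>" using Theta_ne by blast
  define \<nu> where "\<nu> = density \<rho> (\<lambda>x. ennreal (exp (x * \<theta>0)))"
  have mf: "(\<lambda>x. exp (x * \<theta>0)) \<in> borel_measurable \<rho>" by (intro meas) measurable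
  have "emeasure \<nu> (space \<nu>) = (\<integral>\<^sup>+x. ennreal (exp (x * \<theta>0)) \<partial>\<rho>)"
    unfolding \<nu>_def using mf by (simp add: emeasure_density)
  also have "\<dots> = ennreal (\<integral>x. exp (x * \<theta>0) \<partial>\<rho>)"
    using integ[OF t0] by (intro nn_integral_eq_integral) auto
  finally have "emeasure \<nu> (space \<nu>) \<noteq> \<infinity>" by simp
  then interpret fm: finite_measure \<nu> by (rule finite_measureI)
  have mg: "(\<lambda>x. ennreal (exp (- (x * \<theta>0)))) \<in> borel_measurable \<nu>"
    unfolding \<nu>_def by (simp, intro measurable_compose[OF _ measurable_ennreal] meas) measurable
  have "sigma_finite_measure (density \<nu> (\<lambda>x. ennreal (exp (- (x * \<theta>0)))))"
    using fm.sigma_finite_iff_density_finite[OF mg] by simp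
  also have "density \<nu> (\<lambda>x. ennreal (exp (- (x * \<theta>0)))) =
      density \<rho> (\<lambda>x. ennreal (exp (x * \<theta>0)) * ennreal (exp (- (x * \<theta>0))))"
    unfolding \<nu>_def
    by (rule density_density_eq) (intro measurable_compose[OF _ measurable_ennreal] meas; measurable)+
  also have "(\<lambda>x. ennreal (exp (x * \<theta>0)) * ennreal (exp (- (x * \<theta>0)))) = (\<lambda>_. 1)"
    by (rule ext) (simp flip: ennreal_mult add: exp_minus)
  finally show ?thesis by (simp add: density_1)
qed

lemma KL_eq: assumes "\<theta> \<in> \<Theta>" "\<theta>' \<in> \<Theta>"
  shows "KL_divergence (exp 1) (expfam \<rho> \<theta>') (expfam \<rho> \<theta>) = (\<theta> - \<theta>') * m \<theta> - ln (Z \<theta>) + ln (Z \<theta>')"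
proof -
  interpret sf: sigma_finite_measure \<rho> by (rule sigma_finite)
  have Zp: "Z \<theta> > 0" "Z \<theta>' > 0" using Z_pos assms by auto
  have "KL_divergence (exp 1) (expfam \<rho> \<theta>') (expfam \<rho> \<theta>) =
    (\<integral>x. exp (x * \<theta> - cumulant \<rho> \<theta>) * log (exp 1) (exp (x * \<theta> - cumulant \<rho> \<theta>) / exp (x * \<theta>' - cumulant \<rho> \<theta>')) \<partial>\<rho>)"
    unfolding expfam_def
    by (rule sf.KL_density_density) (auto intro!: meas)
  also have "\<dots> = (\<integral>x. ((\<theta> - \<theta>') / Z \<theta>) * (x * exp (x * \<theta>)) + ((ln (Z \<theta>') - ln (Z \<theta>)) / Z \<theta>) * exp (x * \<theta>) \<partial>\<rho>)"
  proof (rule Bochner_Integration.integral_cong[OF refl])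
    fix x
    have A: "exp (x * \<theta> - cumulant \<rho> \<theta>) = exp (x * \<theta>) / Z \<theta>"
      using Zp by (simp add: cumulant_eq exp_diff)
    have B: "log (exp 1) (exp (x * \<theta> - cumulant \<rho> \<theta>) / exp (x * \<theta>' - cumulant \<rho> \<theta>'))
       = x * \<theta> - ln (Z \<theta>) - (x * \<theta>' - ln (Z \<theta>'))"
      by (simp add: log_def cumulant_eq flip: exp_diff)
    show "exp (x * \<theta> - cumulant \<rho> \<theta>) * log (exp 1) (exp (x * \<theta> - cumulant \<rho> \<theta>) / exp (x * \<theta>' - cumulant \<rho> \<theta>'))
      = ((\<theta> - \<theta>') / Z \<theta>) * (x * exp (x * \<theta>)) + ((ln (Z \<theta>') - ln (Z \<theta>)) / Z \<theta>) * exp (x * \<theta>)"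
      unfolding B unfolding A using Zp by (simp add: field_simps)
  qed
  also have "\<dots> = ((\<theta> - \<theta>') / Z \<theta>) * I \<theta> + ((ln (Z \<theta>') - ln (Z \<theta>)) / Z \<theta>) * Z \<theta>"
    unfolding I_def Z_def using integ[OF assms(1)] integ_x[OF assms(1)] by simp
  also have "\<dots> = (\<theta> - \<theta>') * m \<theta> - ln (Z \<theta>) + ln (Z \<theta>')"
    unfolding m_def using Zp by (simp add: field_simps)
  finally show ?thesis .
qed

end

theorem mainTheorem6:
  fixes \<rho> :: "real measure" and \<Theta> M :: "real set"
    and w1 wi mu1 b1 bi mui y :: real
  assumes rho_borel: "sets \<rho> = sets borel"
    and Theta_open: "open \<Theta>" and Theta_interval: "is_interval \<Theta>" and Theta_ne: "\<Theta> \<noteq> {}"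
    and integrable: "\<forall>\<theta>\<in>\<Theta>. integrable \<rho> (\<lambda>x. exp (x * \<theta>))"
    and differentiable: "\<forall>\<theta>\<in>\<Theta>. cumulant \<rho> differentiable (at \<theta>)"
    and mean_bij: "bij_betw (deriv (cumulant \<rho>)) \<Theta> M"
    and M_open: "open M" and M_interval: "is_interval M"
    and w1: "w1 \<ge> 0" and wi: "wi \<ge> 0" and wpos: "w1 + wi > 0"
    and inM: "mu1 \<in> M" "b1 \<in> M" "bi \<in> M" "mui \<in> M"
    and order: "mui \<le> bi" "bi < b1" "b1 \<le> mu1"
    and y: "y \<in> {mui..mu1}"
  shows "(let lam = (w1 * b1 + wi * bi) / (w1 + wi) in
           w1 * kl_mean \<rho> \<Theta> mu1 y + wi * kl_mean \<rho> \<Theta> mui y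
           \<ge> w1 * kl_mean \<rho> \<Theta> b1 lam + wi * kl_mean \<rho> \<Theta> bi lam)"
proof -
  have nz: "emeasure \<rho> (space \<rho>) \<noteq> 0"
  proof
    assume z: "emeasure \<rho> (space \<rho>) = 0"
    then have AEF: "AE x in \<rho>. False"
      using ae_filter_eq_bot_iff[of \<rho>] by (simp add: eventually_False)
    have "cumulant \<rho> t = 0" for t
    proof -
      have "AE x in \<rho>. exp (x * t) = 0" using AEF by (rule eventually_mono) simp
      then have "(\<integral>x. exp (x * t) \<partial>\<rho>) = 0" by (rule integral_eq_zero_AE)
      then show ?thesis unfolding cumulant_def by simp
    qed
    then have c0: "cumulant \<rho> = (\<lambda>_. 0)" by (rule ext)
    have d0: "deriv (cumulant \<rho>) t = 0" for t unfolding c0 by simp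
    obtain t0 where t0: "t0 \<in> \<Theta>" using Theta_ne by blast
    obtain e where e: "e > 0" "ball t0 e \<subseteq> \<Theta>" using Theta_open t0 openE by blast
    have t1: "t0 + e / 2 \<in> \<Theta>" using e by (intro subsetD[OF e(2)]) (simp add: dist_real_def)
    have "inj_on (deriv (cumulant \<rho>)) \<Theta>" using mean_bij bij_betw_imp_inj_on by blast
    then have "t0 = t0 + e / 2" using inj_onD[OF _ _ t0 t1] d0 by metis
    then show False using e by simp
  qed
  interpret ef \<rho> \<Theta>
    using rho_borel Theta_open Theta_ne integrable nz by unfold_locales auto
  define T where "T = mean_to_param \<rho> \<Theta>"
  define F where "F \<mu> = ln (Z (T \<mu>))" for \<mu>
  have TM: "T \<mu> \<in> \<Theta>" if "\<mu> \<in> M" for \<mu>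
    using bij_betw_inv_into[OF mean_bij] that unfolding T_def mean_to_param_def by (blast dest: bij_betwE)
  have mT: "m (T \<mu>) = \<mu>" if "\<mu> \<in> M" for \<mu>
  proof -
    have "deriv (cumulant \<rho>) (T \<mu>) = \<mu>"
      unfolding T_def mean_to_param_def using bij_betw_inv_into_right[OF mean_bij that] .
    then show ?thesis using deriv_eq[OF TM[OF that]] differentiable TM[OF that] by simp
  qed
  have kl: "kl_mean \<rho> \<Theta> a z = (T a - T z) * a - F a + F z" if "a \<in> M" "z \<in> M" for a z
    unfolding kl_mean_def T_def[symmetric] F_def
    using KL_eq[OF TM[OF that(1)] TM[OF that(2)]] mT[OF that(1)] by simp
  have nn: "F y \<ge> F a + (T y - T a) * a" if "a \<in> M" "y \<in> M" for a y
    using gibbs[OF TM[OF that(1)] TM[OF that(2)]] mT[OF that(1)] unfolding F_def by simp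
  have mono: "T a \<le> T y" if "a \<in> M" "y \<in> M" "a \<le> y" for a y
  proof (rule ccontr)
    assume "\<not> T a \<le> T y"
    then have lt: "T y < T a" by simp
    have "a \<noteq> y" using lt by auto
    then have ay: "a < y" using that by simp
    have "0 < (T a - T y) * (y - a)" using lt ay by simp
    then show False using nn[OF that(1,2)] nn[OF that(2,1)] by (simp add: algebra_simps)
  qed
  have iv: "\<And>a b x. a \<in> M \<Longrightarrow> b \<in> M \<Longrightarrow> a \<le> x \<Longrightarrow> x \<le> b \<Longrightarrow> x \<in> M"
    using M_interval unfolding is_interval_1 by blast
  define l where "l = (w1 * b1 + wi * bi) / (w1 + wi)"
  have l1: "l \<le> b1" unfolding l_def using order w1 wi wpos
    using mult_left_mono[of bi b1 wi] by (simp add: divide_le_eq algebra_simps)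
  have l2: "bi \<le> l" unfolding l_def using order w1 wi wpos
    using mult_left_mono[of bi b1 w1] by (simp add: le_divide_eq algebra_simps)
  have lM: "l \<in> M" using iv[OF inM(3) inM(2) l2 l1] .
  have yM: "y \<in> M" using iv[OF inM(4) inM(1)] y by auto
  have main: "w1 * ((\<lambda>a z. (T a - T z) * a - F a + F z) mu1 y) + wi * ((\<lambda>a z. (T a - T z) * a - F a + F z) mui y)
     \<ge> w1 * ((\<lambda>a z. (T a - T z) * a - F a + F z) b1 l) + wi * ((\<lambda>a z. (T a - T z) * a - F a + F z) bi l)"
    unfolding l_def
    by (rule abstract_kl[of M F T, OF nn mono M_interval w1 wi wpos inM order y]) auto
  show ?thesis
    unfolding Let_def l_def[symmetric]
    using main kl[OF inM(1) yM] kl[OF inM(4) yM] kl[OF inM(2) lM] kl[OF inM(3) lM] by simp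
qed

end
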